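(* For every polynomial orbit-finite set $\Sigma$, the delay function $(\Sigma+\{\bot\})^*\supseteq\Sigma^*\ni a_1a_2\cdots a_k\mapsto \bot\,a_1\cdots a_{k-1}\in(\Sigma+\{\bot\})^*$ (for $k\ge1$; the empty word maps to itself) is a composition of primes.
   Context: Atoms $\mathbb A$ are a countably infinite set; polynomial orbit-finite sets are built from $\mathbb A$ and singletons by finite products and disjoint unions; equivariant means commuting with all bijections of $\mathbb A$. Compositions of primes: the smallest class containing (i) length-preserving homomorphisms lifting letterwise an equivariant function between polynomial orbit-finite sets, (ii) classical Mealy machine functions (finite alphabets and states, transition $Q\times\Sigma\to Q\times\Gamma$), (iii) atom propagation $(\mathbb A+\{\epsilon,\downarrow\})^*\to(\mathbb A+\bot)^*$ (position $i$ outputs the atom of position $j$ if $i$ is labelled $\downarrow$, $j<i$ carries an atom, and all positions strictly between are labelled $\epsilon$; otherwise $\bot$), closed under sequential composition and parallel composition $f_1|f_2:(\Sigma_1\times\Sigma_2)^*\to(\Gamma_1\times\Gamma_2)^*$ applying $f_i$ to the $i$-th projection. *)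

theory Defs
  imports Main
begin

type_synonym atom = nat

datatype pof = PAtoms | PUnit | PProd pof pof | PSum pof pof

text \<open>Universe of values; the elements of a polynomial orbit-finite set are carved out
  by the predicate in_pof.\<close>
datatype val = VAtom atom | VUnit | VPair val val | VInl val | VInr val

fun in_pof :: "pof \<Rightarrow> val \<Rightarrow> bool" where
  "in_pof PAtoms (VAtom a) = True"
| "in_pof PUnit VUnit = True"
| "in_pof (PProd s t) (VPair x y) = (in_pof s x \<and> in_pof t y)"
| "in_pof (PSum s t) (VInl x) = in_pof s x"
| "in_pof (PSum s t) (VInr y) = in_pof t y"
| "in_pof _ _ = False"

definition elems :: "pof \<Rightarrow> val set" where
  "elems s = {x. in_pof s x}"

fun rename :: "(atom \<Rightarrow> atom) \<Rightarrow> val \<Rightarrow> val" where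
  "rename \<pi> (VAtom a) = VAtom (\<pi> a)"
| "rename \<pi> VUnit = VUnit"
| "rename \<pi> (VPair x y) = VPair (rename \<pi> x) (rename \<pi> y)"
| "rename \<pi> (VInl x) = VInl (rename \<pi> x)"
| "rename \<pi> (VInr x) = VInr (rename \<pi> x)"

definition equivariant_fun :: "pof \<Rightarrow> pof \<Rightarrow> (val \<Rightarrow> val) \<Rightarrow> bool" where
  "equivariant_fun s t f \<longleftrightarrow>
     (\<forall>x \<in> elems s. f x \<in> elems t) \<and>
     (\<forall>\<pi>. bij \<pi> \<longrightarrow> (\<forall>x \<in> elems s. f (rename \<pi> x) = rename \<pi> (f x)))"

text \<open>Finite polynomial orbit-finite sets: those not using the atoms.\<close>
fun atom_free :: "pof \<Rightarrow> bool" where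
  "atom_free PAtoms = False"
| "atom_free PUnit = True"
| "atom_free (PProd s t) = (atom_free s \<and> atom_free t)"
| "atom_free (PSum s t) = (atom_free s \<and> atom_free t)"

fun mealy_run :: "(nat \<Rightarrow> val \<Rightarrow> nat \<times> val) \<Rightarrow> nat \<Rightarrow> val list \<Rightarrow> val list" where
  "mealy_run \<delta> q [] = []"
| "mealy_run \<delta> q (a # w) = snd (\<delta> q a) # mealy_run \<delta> (fst (\<delta> q a)) w"

text \<open>Atom propagation, input alphabet A + {eps, down} encoded as
  VInl (VAtom a), VInr (VInl VUnit) = eps, VInr (VInr VUnit) = down;
  output alphabet A + {bot} with bot = VInr VUnit.\<close>
definition eps_letter :: val where "eps_letter = VInr (VInl VUnit)"
definition down_letter :: val where "down_letter = VInr (VInr VUnit)"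
definition bot_letter :: val where "bot_letter = VInr VUnit"

definition prop_in :: pof where "prop_in = PSum PAtoms (PSum PUnit PUnit)"
definition prop_out :: pof where "prop_out = PSum PAtoms PUnit"

definition atom_prop :: "val list \<Rightarrow> val list" where
  "atom_prop w = map (\<lambda>i.
     if w ! i = down_letter \<and>
        (\<exists>j<i. \<exists>a. w ! j = VInl (VAtom a) \<and> (\<forall>k. j < k \<and> k < i \<longrightarrow> w ! k = eps_letter))
     then VInl (VAtom (SOME a. \<exists>j<i. w ! j = VInl (VAtom a) \<and>
                              (\<forall>k. j < k \<and> k < i \<longrightarrow> w ! k = eps_letter)))
     else bot_letter) [0..<length w]"

fun vfst :: "val \<Rightarrow> val" where
  "vfst (VPair x y) = x"
| "vfst _ = VUnit"

fun vsnd :: "val \<Rightarrow> val" where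
  "vsnd (VPair x y) = y"
| "vsnd _ = VUnit"

definition par_comp :: "(val list \<Rightarrow> val list) \<Rightarrow> (val list \<Rightarrow> val list) \<Rightarrow> val list \<Rightarrow> val list" where
  "par_comp f1 f2 w = map2 VPair (f1 (map vfst w)) (f2 (map vsnd w))"

text \<open>comp_primes s t f: f is a composition of primes with input alphabet s and output
  alphabet t (f is only meaningful on words over elems s).\<close>
inductive comp_primes :: "pof \<Rightarrow> pof \<Rightarrow> (val list \<Rightarrow> val list) \<Rightarrow> bool" where
  letterwise: "equivariant_fun s t g \<Longrightarrow> comp_primes s t (map g)"
| mealy: "\<lbrakk> atom_free s; atom_free t; finite Q; q0 \<in> Q;
            \<forall>q\<in>Q. \<forall>a\<in>elems s. fst (\<delta> q a) \<in> Q \<and> snd (\<delta> q a) \<in> elems t \<rbrakk>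
          \<Longrightarrow> comp_primes s t (mealy_run \<delta> q0)"
| atomprop: "comp_primes prop_in prop_out atom_prop"
| seq: "\<lbrakk> comp_primes s t f; comp_primes t u g \<rbrakk> \<Longrightarrow> comp_primes s u (g \<circ> f)"
| par: "\<lbrakk> comp_primes s1 t1 f1; comp_primes s2 t2 f2 \<rbrakk>
          \<Longrightarrow> comp_primes (PProd s1 s2) (PProd t1 t2) (par_comp f1 f2)"

text \<open>Delay function Sigma* -> (Sigma + {bot})*; letters a of Sigma become VInl a,
  bot is VInr VUnit.\<close>
fun delay :: "val list \<Rightarrow> val list" where
  "delay [] = []"
| "delay w = bot_letter # map VInl (butlast w)"

end

theory Submission
  imports Defs
begin

definition Tb :: "pof \<Rightarrow> pof" where "Tb s = PSum s PUnit"

fun shift :: "val list \<Rightarrow> val list" where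
  "shift [] = []"
| "shift (x # xs) = bot_letter # butlast (x # xs)"

lemma shift_len[simp]: "length (shift w) = length w"
  by (cases w) auto

lemma shift_nth: "i < length w \<Longrightarrow> shift w ! i = (if i = 0 then bot_letter else w ! (i - 1))"
proof (cases w)
  case (Cons x xs)
  assume i: "i < length w"
  show ?thesis
  proof (cases i)
    case (Suc j)
    have "butlast w ! j = w ! j" using i Suc by (intro nth_butlast) simp
    then show ?thesis using Cons Suc by simp
  qed (simp add: Cons)
qed simp

lemma elems_Tb: "x \<in> elems (Tb s) \<longleftrightarrow> (\<exists>a. x = VInl a \<and> in_pof s a) \<or> x = bot_letter"
  by (cases x) (auto simp: elems_def Tb_def bot_letter_def elim: in_pof.elims)

lemma in_pof_prod: "in_pof (PProd a b) y \<Longrightarrow> y = VPair (vfst y) (vsnd y) \<and> in_pof a (vfst y) \<and> in_pof b (vsnd y)"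
  by (cases y) auto

lemma rename_bot[simp]: "rename \<pi> bot_letter = bot_letter"
  and rename_down[simp]: "rename \<pi> down_letter = down_letter"
  and rename_eps[simp]: "rename \<pi> eps_letter = eps_letter"
  by (simp_all add: bot_letter_def down_letter_def eps_letter_def)

lemma rename_vfst: "vfst (rename \<pi> y) = rename \<pi> (vfst y)"
  and rename_vsnd: "vsnd (rename \<pi> y) = rename \<pi> (vsnd y)"
  by (cases y; simp)+

lemma rename_VUnit_iff[simp]: "rename \<pi> x = VUnit \<longleftrightarrow> x = VUnit"
  by (cases x) auto

lemma rename_VInl_VUnit_iff[simp]: "rename \<pi> x = VInl VUnit \<longleftrightarrow> x = VInl VUnit"
  by (cases x) auto

lemma rename_VInr_VUnit_iff[simp]: "rename \<pi> x = VInr VUnit \<longleftrightarrow> x = VInr VUnit"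
  by (cases x) auto

lemma combine:
  assumes f1: "comp_primes (Tb A) (Tb A) f1" "\<forall>w\<in>lists (elems (Tb A)). f1 w = shift w"
    and f2: "comp_primes (Tb B) (Tb B) f2" "\<forall>w\<in>lists (elems (Tb B)). f2 w = shift w"
    and g: "equivariant_fun (Tb S) (PProd (Tb A) (Tb B)) g"
    and h: "equivariant_fun (PProd (Tb A) (Tb B)) (Tb S) h"
    and hbot: "h (VPair bot_letter bot_letter) = bot_letter"
    and hg: "\<forall>x\<in>elems (Tb S). h (g x) = x"
  shows "\<exists>f. comp_primes (Tb S) (Tb S) f \<and> (\<forall>w\<in>lists (elems (Tb S)). f w = shift w)"
proof (intro exI conjI ballI)
  show "comp_primes (Tb S) (Tb S) (map h \<circ> (par_comp f1 f2 \<circ> map g))"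
    by (rule comp_primes.seq[OF comp_primes.seq[OF comp_primes.letterwise[OF g] comp_primes.par[OF f1(1) f2(1)]] comp_primes.letterwise[OF h]])
  fix w assume w: "w \<in> lists (elems (Tb S))"
  have gw: "\<forall>x\<in>set w. g x \<in> elems (PProd (Tb A) (Tb B))"
    using w g by (auto simp: equivariant_fun_def)
  have gp: "\<forall>x\<in>set w. g x = VPair (vfst (g x)) (vsnd (g x)) \<and> vfst (g x) \<in> elems (Tb A) \<and> vsnd (g x) \<in> elems (Tb B)"
    using gw in_pof_prod unfolding elems_def by blast
  have 1: "f1 (map (vfst \<circ> g) w) = shift (map (vfst \<circ> g) w)"
  proof -
    have "map (vfst \<circ> g) w \<in> lists (elems (Tb A))" using gp by auto
    then show ?thesis using f1(2) by blast
  qed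
  have 2: "f2 (map (vsnd \<circ> g) w) = shift (map (vsnd \<circ> g) w)"
  proof -
    have "map (vsnd \<circ> g) w \<in> lists (elems (Tb B))" using gp by auto
    then show ?thesis using f2(2) by blast
  qed
  show "(map h \<circ> (par_comp f1 f2 \<circ> map g)) w = shift w"
  proof (rule nth_equalityI)
    show "length ((map h \<circ> (par_comp f1 f2 \<circ> map g)) w) = length (shift w)"
      by (simp add: par_comp_def 1 2)
    fix i assume "i < length ((map h \<circ> (par_comp f1 f2 \<circ> map g)) w)"
    then have i: "i < length w" by (simp add: par_comp_def 1 2)
    show "(map h \<circ> (par_comp f1 f2 \<circ> map g)) w ! i = shift w ! i"
    proof (cases i)
      case 0
      then show ?thesis using i hbot by (simp add: par_comp_def 1 2 shift_nth)
    next
      case (Suc j)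
      have xj: "w ! j \<in> set w" using i Suc by simp
      have "VPair (vfst (g (w ! j))) (vsnd (g (w ! j))) = g (w ! j)" using gp xj by metis
      moreover have "h (g (w ! j)) = w ! j" using hg w xj by auto
      ultimately show ?thesis using i Suc by (simp add: par_comp_def 1 2 shift_nth)
    qed
  qed
qed

fun gP :: "val \<Rightarrow> val" where
  "gP (VInl (VPair a b)) = VPair (VInl a) (VInl b)"
| "gP _ = VPair bot_letter bot_letter"

fun hP :: "val \<Rightarrow> val" where
  "hP (VPair (VInl a) (VInl b)) = VInl (VPair a b)"
| "hP _ = bot_letter"

fun gS :: "val \<Rightarrow> val" where
  "gS (VInl (VInl a)) = VPair (VInl a) bot_letter"
| "gS (VInl (VInr b)) = VPair bot_letter (VInl b)"
| "gS _ = VPair bot_letter bot_letter"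

fun hS :: "val \<Rightarrow> val" where
  "hS (VPair (VInl a) y) = VInl (VInl a)"
| "hS (VPair x (VInl b)) = VInl (VInr b)"
| "hS _ = bot_letter"

lemma gP_eqv: "gP (rename \<pi> x) = rename \<pi> (gP x)"
  by (cases x rule: gP.cases) (simp_all add: bot_letter_def)
lemma hP_eqv: "hP (rename \<pi> x) = rename \<pi> (hP x)"
  by (cases x rule: hP.cases) (simp_all add: bot_letter_def)
lemma gS_eqv: "gS (rename \<pi> x) = rename \<pi> (gS x)"
  by (cases x rule: gS.cases) (simp_all add: bot_letter_def)
lemma hS_eqv: "hS (rename \<pi> x) = rename \<pi> (hS x)"
  by (cases x rule: hS.cases) (simp_all add: bot_letter_def)

lemma elems_prod: "y \<in> elems (PProd a b) \<longleftrightarrow> (\<exists>y1 y2. y = VPair y1 y2 \<and> y1 \<in> elems a \<and> y2 \<in> elems b)"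
  by (cases y) (auto simp: elems_def)

lemma elems_sum: "y \<in> elems (PSum a b) \<longleftrightarrow> (\<exists>y1. y = VInl y1 \<and> y1 \<in> elems a) \<or> (\<exists>y2. y = VInr y2 \<and> y2 \<in> elems b)"
  by (cases y) (auto simp: elems_def)

lemma bot_in: "bot_letter \<in> elems (Tb s)" by (simp add: elems_Tb)

lemma prod_case:
  assumes "\<exists>f. comp_primes (Tb A) (Tb A) f \<and> (\<forall>w\<in>lists (elems (Tb A)). f w = shift w)"
    and "\<exists>f. comp_primes (Tb B) (Tb B) f \<and> (\<forall>w\<in>lists (elems (Tb B)). f w = shift w)"
  shows "\<exists>f. comp_primes (Tb (PProd A B)) (Tb (PProd A B)) f \<and> (\<forall>w\<in>lists (elems (Tb (PProd A B))). f w = shift w)"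
proof -
  obtain f1 f2 where f1: "comp_primes (Tb A) (Tb A) f1" "\<forall>w\<in>lists (elems (Tb A)). f1 w = shift w"
    and f2: "comp_primes (Tb B) (Tb B) f2" "\<forall>w\<in>lists (elems (Tb B)). f2 w = shift w"
    using assms by blast
  show ?thesis
  proof (rule combine[OF f1 f2, of _ gP hP])
    show "equivariant_fun (Tb (PProd A B)) (PProd (Tb A) (Tb B)) gP"
      unfolding equivariant_fun_def
    proof (intro conjI ballI allI impI)
      fix x assume "x \<in> elems (Tb (PProd A B))"
      then consider a where "x = VInl a" "in_pof (PProd A B) a" | "x = bot_letter" by (auto simp: elems_Tb)
      then show "gP x \<in> elems (PProd (Tb A) (Tb B))"
      proof cases
        case (1 a) then show ?thesis by (cases a) (auto simp: elems_def Tb_def bot_letter_def)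
      next
        case 2 then show ?thesis by (auto simp: elems_def Tb_def bot_letter_def)
      qed
    qed (simp add: gP_eqv)
    show "equivariant_fun (PProd (Tb A) (Tb B)) (Tb (PProd A B)) hP"
      unfolding equivariant_fun_def
      by (auto simp: hP_eqv elems_Tb elems_prod bot_in bot_letter_def)
    show "hP (VPair bot_letter bot_letter) = bot_letter" by (simp add: bot_letter_def)
    show "\<forall>x\<in>elems (Tb (PProd A B)). hP (gP x) = x"
      apply (auto simp: elems_Tb bot_letter_def)
      subgoal for a by (cases a) (auto simp: bot_letter_def)
      done
  qed
qed

lemma sum_case:
  assumes "\<exists>f. comp_primes (Tb A) (Tb A) f \<and> (\<forall>w\<in>lists (elems (Tb A)). f w = shift w)"
    and "\<exists>f. comp_primes (Tb B) (Tb B) f \<and> (\<forall>w\<in>lists (elems (Tb B)). f w = shift w)"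
  shows "\<exists>f. comp_primes (Tb (PSum A B)) (Tb (PSum A B)) f \<and> (\<forall>w\<in>lists (elems (Tb (PSum A B))). f w = shift w)"
proof -
  obtain f1 f2 where f1: "comp_primes (Tb A) (Tb A) f1" "\<forall>w\<in>lists (elems (Tb A)). f1 w = shift w"
    and f2: "comp_primes (Tb B) (Tb B) f2" "\<forall>w\<in>lists (elems (Tb B)). f2 w = shift w"
    using assms by blast
  show ?thesis
  proof (rule combine[OF f1 f2, of _ gS hS])
    show "equivariant_fun (Tb (PSum A B)) (PProd (Tb A) (Tb B)) gS"
      unfolding equivariant_fun_def
    proof (intro conjI ballI allI impI)
      fix x assume "x \<in> elems (Tb (PSum A B))"
      then consider a where "x = VInl a" "in_pof (PSum A B) a" | "x = bot_letter" by (auto simp: elems_Tb)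
      then show "gS x \<in> elems (PProd (Tb A) (Tb B))"
      proof cases
        case (1 a) then show ?thesis by (cases a) (auto simp: elems_def Tb_def bot_letter_def)
      next
        case 2 then show ?thesis by (auto simp: elems_def Tb_def bot_letter_def)
      qed
    qed (simp add: gS_eqv)
    show "equivariant_fun (PProd (Tb A) (Tb B)) (Tb (PSum A B)) hS"
      unfolding equivariant_fun_def
      by (auto simp: hS_eqv elems_Tb elems_prod bot_in bot_letter_def)
    show "hS (VPair bot_letter bot_letter) = bot_letter" by (simp add: bot_letter_def)
    show "\<forall>x\<in>elems (Tb (PSum A B)). hS (gS x) = x"
      apply (auto simp: elems_Tb bot_letter_def)
      subgoal for a by (cases a) (auto simp: bot_letter_def)
      done
  qed
qed

definition outU :: "nat \<Rightarrow> val" where "outU q = (if q = 1 then VInl VUnit else bot_letter)"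
definition dU :: "nat \<Rightarrow> val \<Rightarrow> nat \<times> val" where
  "dU q a = (if a = VInl VUnit then 1 else 0, outU q)"

lemma mealyU: "\<forall>x\<in>set w. x \<in> elems (Tb PUnit) \<Longrightarrow>
   mealy_run dU q w = (case w of [] \<Rightarrow> [] | _ \<Rightarrow> outU q # butlast w)"
proof (induction w arbitrary: q)
  case Nil then show ?case by simp
next
  case (Cons a w)
  have a: "a = VInl VUnit \<or> a = bot_letter" using Cons.prems
    by (auto simp: elems_Tb elim: in_pof.elims)
  have "outU (if a = VInl VUnit then 1 else 0) = a" using a by (auto simp: outU_def bot_letter_def)
  then show ?case using Cons by (cases w) (auto simp: dU_def)
qed

lemma unit_case:
  "\<exists>f. comp_primes (Tb PUnit) (Tb PUnit) f \<and> (\<forall>w\<in>lists (elems (Tb PUnit)). f w = shift w)"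
proof (intro exI conjI ballI)
  show "comp_primes (Tb PUnit) (Tb PUnit) (mealy_run dU 0)"
    by (rule comp_primes.mealy[where Q = "{0,1}"]) (auto simp: Tb_def dU_def outU_def elems_def bot_letter_def)
  fix w assume "w \<in> lists (elems (Tb PUnit))"
  then show "mealy_run dU 0 w = shift w"
    by (subst mealyU) (auto simp: outU_def split: list.split)
qed

lemma ap_len[simp]: "length (atom_prop u) = length u"
  by (simp add: atom_prop_def)

lemma ap_nth:
  assumes i: "i < length u" and d: "u ! i = down_letter" and ne: "0 < i \<Longrightarrow> u ! (i - 1) \<noteq> eps_letter"
  shows "atom_prop u ! i = (if 0 < i \<and> (\<exists>a. u ! (i - 1) = VInl (VAtom a)) then u ! (i - 1) else bot_letter)"
proof -
  have P: "(\<exists>j<i. u ! j = VInl (VAtom a) \<and> (\<forall>k. j < k \<and> k < i \<longrightarrow> u ! k = eps_letter))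
      \<longleftrightarrow> (0 < i \<and> u ! (i - 1) = VInl (VAtom a))" for a
  proof
    assume "\<exists>j<i. u ! j = VInl (VAtom a) \<and> (\<forall>k. j < k \<and> k < i \<longrightarrow> u ! k = eps_letter)"
    then obtain j where j: "j < i" "u ! j = VInl (VAtom a)" "\<forall>k. j < k \<and> k < i \<longrightarrow> u ! k = eps_letter" by blast
    have "j = i - 1"
    proof (rule ccontr)
      assume "j \<noteq> i - 1"
      then have "j < i - 1" using j by arith
      then have "u ! (i - 1) = eps_letter" using j by auto
      then show False using ne j by auto
    qed
    then show "0 < i \<and> u ! (i - 1) = VInl (VAtom a)" using j by auto
  next
    assume "0 < i \<and> u ! (i - 1) = VInl (VAtom a)"
    then show "\<exists>j<i. u ! j = VInl (VAtom a) \<and> (\<forall>k. j < k \<and> k < i \<longrightarrow> u ! k = eps_letter)"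
      by (intro exI[of _ "i - 1"]) auto
  qed
  have C: "(\<exists>j<i. \<exists>a. u ! j = VInl (VAtom a) \<and> (\<forall>k. j < k \<and> k < i \<longrightarrow> u ! k = eps_letter))
      \<longleftrightarrow> (\<exists>a. 0 < i \<and> u ! (i - 1) = VInl (VAtom a))"
    using P by blast
  have "atom_prop u ! i = (if u ! i = down_letter \<and>
        (\<exists>j<i. \<exists>a. u ! j = VInl (VAtom a) \<and> (\<forall>k. j < k \<and> k < i \<longrightarrow> u ! k = eps_letter))
     then VInl (VAtom (SOME a. \<exists>j<i. u ! j = VInl (VAtom a) \<and>
                              (\<forall>k. j < k \<and> k < i \<longrightarrow> u ! k = eps_letter)))
     else bot_letter)"
    using i unfolding atom_prop_def by (simp only: length_upt nth_map nth_upt add_0 diff_zero)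
  also have "\<dots> = (if 0 < i \<and> (\<exists>a. u ! (i - 1) = VInl (VAtom a)) then u ! (i - 1) else bot_letter)"
  proof (cases "0 < i \<and> (\<exists>a. u ! (i - 1) = VInl (VAtom a))")
    case True
    then obtain a where a: "0 < i" "u ! (i - 1) = VInl (VAtom a)" by blast
    have "(SOME a. \<exists>j<i. u ! j = VInl (VAtom a) \<and> (\<forall>k. j < k \<and> k < i \<longrightarrow> u ! k = eps_letter)) = a"
      unfolding P using a by auto
    then show ?thesis using C a d by auto
  next
    case False
    then show ?thesis using C by auto
  qed
  finally show ?thesis .
qed

definition pbit :: "nat \<Rightarrow> val" where "pbit n = (if even n then VInl VUnit else VInr VUnit)"
definition dP :: "nat \<Rightarrow> val \<Rightarrow> nat \<times> val" where "dP q a = (1 - q, pbit q)"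

lemma pbit0[simp]: "pbit 0 = VInl VUnit" and pbit1[simp]: "pbit 1 = VInr VUnit"
  and pbitS0[simp]: "pbit (Suc 0) = VInr VUnit"
  by (simp_all add: pbit_def)

lemma mealy_dP[simp]: "mealy_run dP q (x # xs) = pbit q # mealy_run dP (1 - q) xs" by (simp add: dP_def)

lemma mealy_len[simp]: "length (mealy_run d q xs) = length xs"
  by (induction xs arbitrary: q) auto

lemma mealyP: "q \<le> 1 \<Longrightarrow> i < length xs \<Longrightarrow> mealy_run dP q xs ! i = pbit (q + i)"
proof (induction xs arbitrary: q i)
  case Nil then show ?case by simp
next
  case (Cons x xs)
  show ?case
  proof (cases i)
    case 0 then show ?thesis by (simp add: dP_def)
  next
    case (Suc j)
    then have "mealy_run dP (1 - q) xs ! j = pbit (1 - q + j)" using Cons by (simp del: mealy_run.simps)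
    moreover have "pbit (1 - q + j) = pbit (q + Suc j)" using Cons.prems(1)
      by (cases q) (auto simp: pbit_def)
    ultimately show ?thesis using Suc by (simp del: mealy_run.simps)
  qed
qed

fun src :: "val \<Rightarrow> val" where
  "src (VInl (VAtom a)) = VInl (VAtom a)"
| "src _ = down_letter"

lemma src_eqv: "src (rename \<pi> x) = rename \<pi> (src x)"
  by (cases x rule: src.cases) (simp_all add: down_letter_def)

lemma src_in: "src x \<in> elems prop_in"
  by (cases x rule: src.cases) (simp_all add: down_letter_def elems_def prop_in_def)

lemma down_in: "down_letter \<in> elems prop_in"
  by (simp add: down_letter_def elems_def prop_in_def)

lemma src_ne_eps: "src x \<noteq> eps_letter"
  by (cases x rule: src.cases) (simp_all add: down_letter_def eps_letter_def)

lemma srcTA: "x \<in> elems (Tb PAtoms) \<Longrightarrow>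
   (if \<exists>a. src x = VInl (VAtom a) then src x else bot_letter) = x"
  apply (auto simp: elems_Tb down_letter_def bot_letter_def)
  subgoal for a by (cases a) auto
  subgoal for a by (cases a) auto
  done

definition dup :: "val \<Rightarrow> val" where "dup x = VPair x x"

definition g2 :: "val \<Rightarrow> val" where
  "g2 y = VPair (VPair (if vsnd y = pbit 0 then src (vfst y) else down_letter)
                       (if vsnd y = pbit 1 then src (vfst y) else down_letter)) (vsnd y)"

definition g3 :: "val \<Rightarrow> val" where
  "g3 y = (if vsnd y = pbit 0 then vsnd (vfst y) else vfst (vfst y))"

definition P2 :: pof where "P2 = PSum PUnit PUnit"

lemma pbit_in: "pbit n \<in> elems P2" by (simp add: pbit_def elems_def P2_def)

lemma prop_out_Tb: "prop_out = Tb PAtoms" by (simp add: prop_out_def Tb_def)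

definition Fat :: "val list \<Rightarrow> val list" where
  "Fat = map g3 \<circ> (par_comp (par_comp atom_prop atom_prop) (map id) \<circ>
          (map g2 \<circ> (par_comp (map id) (mealy_run dP 0 \<circ> map (\<lambda>_. VUnit)) \<circ> map dup)))"

lemma Fat_cp: "comp_primes (Tb PAtoms) (Tb PAtoms) Fat"
proof -
  have e_dup: "equivariant_fun (Tb PAtoms) (PProd (Tb PAtoms) (Tb PAtoms)) dup"
    by (auto simp: equivariant_fun_def dup_def elems_def)
  have e_id: "equivariant_fun s s id" for s by (simp add: equivariant_fun_def)
  have e_u: "equivariant_fun (Tb PAtoms) PUnit (\<lambda>_. VUnit)"
    by (simp add: equivariant_fun_def elems_def)
  have m: "comp_primes PUnit P2 (mealy_run dP 0)"
    by (rule comp_primes.mealy[where Q = "{0,1}"]) (auto simp: P2_def dP_def pbit_def elems_def)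
  have e_g2: "equivariant_fun (PProd (Tb PAtoms) P2) (PProd (PProd prop_in prop_in) P2) g2"
    unfolding equivariant_fun_def
  proof (intro conjI ballI allI impI)
    fix y assume "y \<in> elems (PProd (Tb PAtoms) P2)"
    then show "g2 y \<in> elems (PProd (PProd prop_in prop_in) P2)"
      using src_in down_in by (auto simp: elems_prod g2_def)
  next
    fix \<pi> :: "atom \<Rightarrow> atom" and y
    show "g2 (rename \<pi> y) = rename \<pi> (g2 y)"
      by (simp add: g2_def rename_vfst rename_vsnd src_eqv)
  qed
  have e_g3: "equivariant_fun (PProd (PProd prop_out prop_out) P2) prop_out g3"
    unfolding equivariant_fun_def
  proof (intro conjI ballI allI impI)
    fix y assume "y \<in> elems (PProd (PProd prop_out prop_out) P2)"
    then show "g3 y \<in> elems prop_out"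
      by (auto simp: elems_prod g3_def)
  next
    fix \<pi> :: "atom \<Rightarrow> atom" and y
    show "g3 (rename \<pi> y) = rename \<pi> (g3 y)"
      by (simp add: g3_def rename_vfst rename_vsnd)
  qed
  have "comp_primes (Tb PAtoms) prop_out Fat"
    unfolding Fat_def
    by (rule comp_primes.seq[OF comp_primes.seq[OF comp_primes.seq[OF comp_primes.seq[OF
          comp_primes.letterwise[OF e_dup]
          comp_primes.par[OF comp_primes.letterwise[OF e_id] comp_primes.seq[OF comp_primes.letterwise[OF e_u] m]]]
          comp_primes.letterwise[OF e_g2]]
          comp_primes.par[OF comp_primes.par[OF comp_primes.atomprop comp_primes.atomprop] comp_primes.letterwise[OF e_id]]]
          comp_primes.letterwise[OF e_g3]])
  then show ?thesis by (simp add: prop_out_Tb)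
qed

lemma Fat_val:
  assumes w: "w \<in> lists (elems (Tb PAtoms))"
  shows "Fat w = shift w"
proof -
  define n where "n = length w"
  define E where "E i = (if even i then src (w ! i) else down_letter)" for i
  define Od where "Od i = (if odd i then src (w ! i) else down_letter)" for i
  have s1: "par_comp (map id) (mealy_run dP 0 \<circ> map (\<lambda>_. VUnit)) (map dup w)
        = map (\<lambda>i. VPair (w ! i) (pbit i)) [0..<n]"
    by (rule nth_equalityI) (simp_all add: par_comp_def dup_def o_def mealyP n_def del: mealy_run.simps)
  have s2: "map g2 (map (\<lambda>i. VPair (w ! i) (pbit i)) [0..<n]) = map (\<lambda>i. VPair (VPair (E i) (Od i)) (pbit i)) [0..<n]"
    by (simp add: g2_def E_def Od_def pbit_def)
  have s3: "par_comp (par_comp atom_prop atom_prop) (map id) (map (\<lambda>i. VPair (VPair (E i) (Od i)) (pbit i)) [0..<n])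
     = map (\<lambda>i. VPair (VPair (atom_prop (map E [0..<n]) ! i) (atom_prop (map Od [0..<n]) ! i)) (pbit i)) [0..<n]"
    by (rule nth_equalityI) (simp_all add: par_comp_def o_def)
  have F: "Fat w = map (\<lambda>i. g3 (VPair (VPair (atom_prop (map E [0..<n]) ! i) (atom_prop (map Od [0..<n]) ! i)) (pbit i))) [0..<n]"
    unfolding Fat_def comp_apply s1 s2 s3 by simp
  show ?thesis
  proof (rule nth_equalityI)
    show "length (Fat w) = length (shift w)" by (simp add: F n_def)
    fix i assume "i < length (Fat w)"
    then have i: "i < n" by (simp add: F)
    have wi: "0 < i \<Longrightarrow> w ! (i - 1) \<in> elems (Tb PAtoms)" using w i n_def by auto
    show "Fat w ! i = shift w ! i"
    proof (cases "even i")
      case True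
      have "atom_prop (map Od [0..<n]) ! i = (if 0 < i \<and> (\<exists>a. map Od [0..<n] ! (i - 1) = VInl (VAtom a)) then map Od [0..<n] ! (i - 1) else bot_letter)"
        by (rule ap_nth) (use i True in \<open>auto simp: Od_def src_ne_eps\<close>)
      moreover have "0 < i \<Longrightarrow> map Od [0..<n] ! (i - 1) = src (w ! (i - 1))" using i True by (simp add: Od_def)
      ultimately have "atom_prop (map Od [0..<n]) ! i = (if i = 0 then bot_letter else w ! (i - 1))"
        using srcTA[OF wi] by (cases "i = 0") auto
      then show ?thesis using i True by (simp add: F g3_def pbit_def shift_nth n_def)
    next
      case False
      have "atom_prop (map E [0..<n]) ! i = (if 0 < i \<and> (\<exists>a. map E [0..<n] ! (i - 1) = VInl (VAtom a)) then map E [0..<n] ! (i - 1) else bot_letter)"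
        by (rule ap_nth) (use i False in \<open>auto simp: E_def src_ne_eps\<close>)
      moreover have "0 < i \<Longrightarrow> map E [0..<n] ! (i - 1) = src (w ! (i - 1))" using i False by (simp add: E_def)
      moreover have ip: "0 < i" using False by (cases i) auto
      ultimately have "atom_prop (map E [0..<n]) ! i = w ! (i - 1)"
        using srcTA[OF wi] by auto
      then show ?thesis using i False ip by (simp add: F g3_def pbit_def shift_nth n_def)
    qed
  qed
qed

lemma shift_all: "\<exists>f. comp_primes (Tb s) (Tb s) f \<and> (\<forall>w\<in>lists (elems (Tb s)). f w = shift w)"
proof (induction s)
  case PAtoms then show ?case using Fat_cp Fat_val by blast
next
  case PUnit then show ?case by (rule unit_case)
next
  case (PProd s1 s2) then show ?case by (rule prod_case)
next
  case (PSum s1 s2) then show ?case by (rule sum_case)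
qed

theorem mainTheorem13:
  fixes \<Sigma> :: pof
  shows "\<exists>f. comp_primes \<Sigma> (PSum \<Sigma> PUnit) f \<and>
             (\<forall>w \<in> lists (elems \<Sigma>). f w = delay w)"
proof -
  obtain f where f: "comp_primes (Tb \<Sigma>) (Tb \<Sigma>) f" "\<forall>w\<in>lists (elems (Tb \<Sigma>)). f w = shift w"
    using shift_all by blast
  have e: "equivariant_fun \<Sigma> (Tb \<Sigma>) VInl"
    by (simp add: equivariant_fun_def elems_def Tb_def)
  show ?thesis
  proof (intro exI conjI ballI)
    show "comp_primes \<Sigma> (PSum \<Sigma> PUnit) (f \<circ> map VInl)"
      using comp_primes.seq[OF comp_primes.letterwise[OF e] f(1)] by (simp add: Tb_def)
    fix w assume w: "w \<in> lists (elems \<Sigma>)"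
    then have "map VInl w \<in> lists (elems (Tb \<Sigma>))" by (auto simp: elems_def Tb_def)
    then have "(f \<circ> map VInl) w = shift (map VInl w)" using f(2) by simp
    also have "\<dots> = delay w" by (cases w) (simp_all add: map_butlast[symmetric])
    finally show "(f \<circ> map VInl) w = delay w" .
  qed
qed

end
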